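(* Let $u_1,\dots,u_m\in\mathbf{B}^d\subset\mathbb{R}^d$ and positive weights $c_1,\dots,c_m$ satisfy \[ \sum_{i=1}^m c_i\, u_i\otimes u_i=\mathrm{Id}_d\quad\text{and}\quad \sum_{i=1}^m c_i u_i=0. \] Let $K$ be the convex hull of $u_1,\dots,u_m$. Then $\mathbf{B}^d\subset\big(\sum_{i=1}^m c_i\big)\cdot K$.
   Context: $\mathbf{B}^d$ is the closed Euclidean unit ball in $\mathbb{R}^d$; $u\otimes u$ denotes the linear map $x\mapsto\langle u,x\rangle u$; $\mathrm{Id}_d$ is the identity on $\mathbb{R}^d$. *)

theory Defs
  imports "HOL-Analysis.Analysis"
begin

end

theory Submission
  imports Defs
begin

theorem lemma4p1:
  fixes u :: "nat \<Rightarrow> 'a::euclidean_space" and c :: "nat \<Rightarrow> real" and m :: nat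
  assumes "\<And>i. i \<in> {1..m} \<Longrightarrow> u i \<in> cball 0 1"
    and "\<And>i. i \<in> {1..m} \<Longrightarrow> c i > 0"
    and "\<And>x. (\<Sum>i=1..m. c i *\<^sub>R ((u i \<bullet> x) *\<^sub>R u i)) = x"
    and "(\<Sum>i=1..m. c i *\<^sub>R u i) = 0"
  shows "cball (0::'a) 1 \<subseteq> (\<lambda>y. (\<Sum>i=1..m. c i) *\<^sub>R y) ` (convex hull (u ` {1..m}))"
proof
  fix x :: 'a assume x: "x \<in> cball 0 1"
  define C where "C = (\<Sum>i=1..m. c i)"
  define K where "K = convex hull (u ` {1..m})"
  have m: "m \<ge> 1"
  proof (rule ccontr)
    assume "\<not> m \<ge> 1"
    hence "m = 0" by simp
    have "(SOME b. b \<in> (Basis::'a set)) \<in> Basis" using nonempty_Basis by (simp add: some_in_eq)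
    hence "(SOME b. b \<in> (Basis::'a set)) \<noteq> 0" by auto
    moreover have "(SOME b. b \<in> (Basis::'a set)) = 0"
      using assms(3)[of "SOME b. b \<in> (Basis::'a set)"] \<open>m = 0\<close> by simp
    ultimately show False by simp
  qed
  have Cpos: "C > 0" unfolding C_def
    using assms(2) m by (intro sum_pos) auto
  have "(1/C) *\<^sub>R x \<in> K"
  proof (rule ccontr)
    assume nK: "(1/C) *\<^sub>R x \<notin> K"
    have "closed K" unfolding K_def
      by (intro compact_imp_closed compact_convex_hull finite_imp_compact) auto
    moreover have "convex K" unfolding K_def by simp
    ultimately obtain a b where ab: "a \<bullet> ((1/C) *\<^sub>R x) < b" "\<forall>y\<in>K. b < a \<bullet> y"
      using separating_hyperplane_closed_point nK by blast
    define v where "v = -a"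
    define s where "s = -b"
    have ai: "v \<bullet> u i < s" if "i \<in> {1..m}" for i
    proof -
      have "u i \<in> K" unfolding K_def using that by (simp add: hull_inc)
      thus ?thesis using ab(2) unfolding v_def s_def by auto
    qed
    have sx: "s < (v \<bullet> x) / C" using ab(1) Cpos unfolding v_def s_def
      by (simp add: inner_commute)
    have "1 \<in> {1..m}" using m by simp
    hence "u 1 \<in> K" unfolding K_def by (simp add: hull_inc)
    hence "b < a \<bullet> u 1" using ab(2) by auto
    hence "v \<noteq> 0" using ab(1) unfolding v_def by auto
    hence nv: "norm v > 0" by simp
    have lb: "- norm v \<le> v \<bullet> u i" if "i \<in> {1..m}" for i
    proof -
      have "\<bar>v \<bullet> u i\<bar> \<le> norm v * norm (u i)" by (rule Cauchy_Schwarz_ineq2)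
      also have "\<dots> \<le> norm v" using assms(1)[OF that]
        by (simp add: mult_left_le)
      finally show ?thesis by linarith
    qed
    have key: "(v \<bullet> u i)^2 \<le> s * (v \<bullet> u i) + s * norm v - norm v * (v \<bullet> u i)"
      if "i \<in> {1..m}" for i
    proof -
      have "0 \<le> (s - v \<bullet> u i) * (v \<bullet> u i + norm v)"
        using ai[OF that] lb[OF that] by simp
      thus ?thesis by (simp add: algebra_simps power2_eq_square)
    qed
    have "norm v ^ 2 = v \<bullet> v" by (simp add: power2_norm_eq_inner)
    also have "\<dots> = v \<bullet> (\<Sum>i=1..m. c i *\<^sub>R ((u i \<bullet> v) *\<^sub>R u i))" using assms(3) by simp
    also have "\<dots> = (\<Sum>i=1..m. c i * (v \<bullet> u i)^2)"
      by (simp add: inner_sum_right inner_commute power2_eq_square mult.assoc)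
    also have "\<dots> \<le> (\<Sum>i=1..m. c i * (s * (v \<bullet> u i) + s * norm v - norm v * (v \<bullet> u i)))"
      using key assms(2) by (intro sum_mono mult_left_mono) (auto simp: less_imp_le)
    also have "\<dots> = (s - norm v) * (\<Sum>i=1..m. c i * (v \<bullet> u i)) + s * norm v * C"
      unfolding C_def by (simp add: algebra_simps sum_distrib_left sum.distrib sum_subtractf)
    also have "(\<Sum>i=1..m. c i * (v \<bullet> u i)) = v \<bullet> (\<Sum>i=1..m. c i *\<^sub>R u i)"
      by (simp add: inner_sum_right)
    also have "\<dots> = 0" using assms(4) by simp
    finally have A: "norm v ^ 2 \<le> s * norm v * C" by simp
    have "s * C < v \<bullet> x" using sx Cpos by (simp add: field_simps)
    also have "\<dots> \<le> norm v * norm x" by (simp add: norm_cauchy_schwarz)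
    also have "\<dots> \<le> norm v" using x nv by (simp add: mult_left_le)
    finally have "s * C * norm v < norm v * norm v" using nv by simp
    thus False using A by (simp add: power2_eq_square algebra_simps)
  qed
  moreover have "x = C *\<^sub>R ((1/C) *\<^sub>R x)" using Cpos by simp
  ultimately show "x \<in> (\<lambda>y. (\<Sum>i=1..m. c i) *\<^sub>R y) ` (convex hull (u ` {1..m}))"
    unfolding C_def K_def by blast
qed

end
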